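(* Let $\bar{\mathcal{G}}=(\bar{\mathcal{V}},\bar{\mathcal{E}})$ be a finite simple 2-connected graph and $\bar u\in\bar{\mathcal{V}}$, $L=|\bar{\mathcal{V}}|-1$. Then there is an enumeration $\bar v_1,\dots,\bar v_L$ of $\bar{\mathcal{V}}\setminus\{\bar u\}$ such that, writing $\bar{\mathcal{V}}_l=\{\bar v_1,\dots,\bar v_l\}$ and $\mathcal{V}_l$ for the set of edges of $\bar{\mathcal{G}}$ incident to at least one vertex of $\bar{\mathcal{V}}_l$: (i) the graph $\mathrm{LG}(\bar{\mathcal{V}}_l)$ is connected for every $l=1,\dots,L$, and (ii) $\mathcal{V}_l\setminus\mathcal{V}_{l-1}\ne\emptyset$ for every $l=2,\dots,L$.
   Context: For $\bar{\mathcal{V}}'\subseteq\bar{\mathcal{V}}$, $\mathrm{LG}(\bar{\mathcal{V}}')$ is the graph whose vertex set is the set of edges of $\bar{\mathcal{G}}$ incident to at least one vertex of $\bar{\mathcal{V}}'$, in which two distinct such edges $e,e'$ are adjacent iff they share an endpoint belonging to $\bar{\mathcal{V}}'$. (Equivalently, $\mathrm{LG}(\bar{\mathcal{V}}')$ is obtained by placing a complete graph on the set of edges incident to each $\bar v\in\bar{\mathcal{V}}'$ and gluing.) $\mathrm{LG}(\bar{\mathcal{V}})$ is the line graph of $\bar{\mathcal{G}}$. A graph is 2-connected if it is connected, has at least 3 vertices, and has no cut vertex. *)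

theory Defs
  imports Main
begin

definition simple_graph :: "'a set \<Rightarrow> 'a set set \<Rightarrow> bool" where
  "simple_graph V E \<longleftrightarrow> finite V \<and>
     (\<forall>e\<in>E. \<exists>x y. x \<in> V \<and> y \<in> V \<and> x \<noteq> y \<and> e = {x, y})"

definition connected_rel :: "'b set \<Rightarrow> ('b \<Rightarrow> 'b \<Rightarrow> bool) \<Rightarrow> bool" where
  "connected_rel W R \<longleftrightarrow> W \<noteq> {} \<and>
     (\<forall>x\<in>W. \<forall>y\<in>W. (\<lambda>a b. a \<in> W \<and> b \<in> W \<and> R a b)\<^sup>*\<^sup>* x y)"

definition adj :: "'a set set \<Rightarrow> 'a \<Rightarrow> 'a \<Rightarrow> bool" where
  "adj E x y \<longleftrightarrow> {x, y} \<in> E \<and> x \<noteq> y"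

definition graph_connected :: "'a set \<Rightarrow> 'a set set \<Rightarrow> bool" where
  "graph_connected V E \<longleftrightarrow> connected_rel V (adj E)"

definition two_connected :: "'a set \<Rightarrow> 'a set set \<Rightarrow> bool" where
  "two_connected V E \<longleftrightarrow> graph_connected V E \<and> card V \<ge> 3 \<and>
     (\<forall>v\<in>V. graph_connected (V - {v}) {e\<in>E. v \<notin> e})"

definition inc_edges :: "'a set set \<Rightarrow> 'a set \<Rightarrow> 'a set set" where
  "inc_edges E V' = {e\<in>E. e \<inter> V' \<noteq> {}}"

definition LG_adj :: "'a set \<Rightarrow> 'a set \<Rightarrow> 'a set \<Rightarrow> bool" where
  "LG_adj V' e e' \<longleftrightarrow> e \<noteq> e' \<and> (\<exists>v\<in>V'. v \<in> e \<and> v \<in> e')"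

definition LG_connected :: "'a set set \<Rightarrow> 'a set \<Rightarrow> bool" where
  "LG_connected E V' \<longleftrightarrow> connected_rel (inc_edges E V') (LG_adj V')"

end

theory Submission
  imports Defs
begin

definition reach :: "'a set set \<Rightarrow> 'a set \<Rightarrow> 'a \<Rightarrow> 'a \<Rightarrow> bool" where
  "reach E W = (\<lambda>a b. a \<in> W \<and> b \<in> W \<and> adj E a b)\<^sup>*\<^sup>*"

lemma conn_reach: "connected_rel W (adj E) \<longleftrightarrow> W \<noteq> {} \<and> (\<forall>x\<in>W. \<forall>y\<in>W. reach E W x y)"
  by (simp add: connected_rel_def reach_def)

lemma adj_sym: "adj E x y = adj E y x"
  by (auto simp: adj_def insert_commute)

lemma reach_step: "reach E W a b \<Longrightarrow> b \<in> W \<Longrightarrow> c \<in> W \<Longrightarrow> adj E b c \<Longrightarrow> reach E W a c"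
  unfolding reach_def by (simp add: rtranclp.rtrancl_into_rtrancl)

lemma reach_sym: "reach E W a b \<Longrightarrow> reach E W b a"
  unfolding reach_def
proof (induction rule: rtranclp_induct)
  case base then show ?case by simp
next
  case (step y z)
  then show ?case using adj_sym
    by (metis (mono_tags, lifting) converse_rtranclp_into_rtranclp)
qed

lemma reach_trans: "reach E W a b \<Longrightarrow> reach E W b c \<Longrightarrow> reach E W a c"
  unfolding reach_def by (rule rtranclp_trans)

lemma reach_mono: "W \<subseteq> W' \<Longrightarrow> reach E W a b \<Longrightarrow> reach E W' a b"
  unfolding reach_def
proof -
  assume s: "W \<subseteq> W'" and r: "(\<lambda>a b. a \<in> W \<and> b \<in> W \<and> adj E a b)\<^sup>*\<^sup>* a b"
  from r show "(\<lambda>a b. a \<in> W' \<and> b \<in> W' \<and> adj E a b)\<^sup>*\<^sup>* a b"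
    by (rule rtranclp_mono[THEN predicate2D, rotated]) (use s in auto)
qed

lemma exit_lemma:
  assumes conn: "connected_rel V' (adj E')"
  and sub: "\<And>a b. adj E' a b \<Longrightarrow> adj E a b"
  and C: "C \<subseteq> V'" "C \<subseteq> W" "c \<in> C" and u: "u \<in> V'" "u \<notin> W"
  and cl: "\<forall>a\<in>C. \<forall>b\<in>V'. adj E a b \<longrightarrow> b \<in> C \<or> b \<notin> W"
  shows "\<exists>x\<in>C. \<exists>w. w \<in> V' \<and> w \<notin> W \<and> adj E x w"
proof -
  have r: "reach E' V' c u" using conn C u unfolding conn_reach by blast
  have "\<And>z. reach E' V' c z \<Longrightarrow> z \<in> C \<or> (\<exists>x\<in>C. \<exists>w. w \<in> V' \<and> w \<notin> W \<and> adj E x w)"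
  proof -
    fix z assume "reach E' V' c z"
    then show "z \<in> C \<or> (\<exists>x\<in>C. \<exists>w. w \<in> V' \<and> w \<notin> W \<and> adj E x w)"
      unfolding reach_def
    proof (induction rule: rtranclp_induct)
      case base then show ?case using C by simp
    next
      case (step y z) then show ?case using cl sub by blast
    qed
  qed
  from this[OF r] u C show ?thesis by blast
qed

lemma reach_split:
  assumes cl: "\<forall>a\<in>C. \<forall>b\<in>W. adj E a b \<longrightarrow> b \<in> C \<or> b = v" and v: "v \<notin> C"
  shows "reach E W v y \<Longrightarrow> y \<in> C \<or> reach E (W - C) v y"
  unfolding reach_def
proof (induction rule: rtranclp_induct)
  case base then show ?case by simp
next
  case (step y z)
  show ?case
  proof (cases "y \<in> C")
    case True
    then show ?thesis using step cl by auto
  next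
    case False
    with step have "(\<lambda>a b. a \<in> W - C \<and> b \<in> W - C \<and> adj E a b)\<^sup>*\<^sup>* v y" by auto
    then show ?thesis using step False
      by (cases "z \<in> C") (auto intro: rtranclp.rtrancl_into_rtrancl)
  qed
qed

lemma find_x:
  assumes G: "\<And>v. v \<in> V \<Longrightarrow> graph_connected (V - {v}) {e\<in>E. v \<notin> e}"
  and W: "W \<subseteq> V" "u \<in> V" "u \<notin> W" "connected_rel W (adj E)" "finite W"
  shows "\<forall>v C. card C = n \<longrightarrow> v \<in> W \<longrightarrow> C \<subseteq> W - {v} \<longrightarrow> C \<noteq> {} \<longrightarrow>
     (\<forall>a\<in>C. \<forall>b\<in>W. adj E a b \<longrightarrow> b \<in> C \<or> b = v) \<longrightarrow>
     (\<exists>x\<in>C. (\<exists>w\<in>V-W. adj E x w) \<and> (W - {x} = {} \<or> connected_rel (W-{x}) (adj E)))"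
proof (induction n rule: less_induct)
  case (less n)
  show ?case
  proof (intro allI impI)
    fix v C
    assume n: "card C = n" and v: "v \<in> W" and CW: "C \<subseteq> W - {v}" and Cne: "C \<noteq> {}"
      and cl: "\<forall>a\<in>C. \<forall>b\<in>W. adj E a b \<longrightarrow> b \<in> C \<or> b = v"
    obtain c where c: "c \<in> C" using Cne by auto
    have gv: "connected_rel (V - {v}) (adj {e\<in>E. v \<notin> e})" using G v W unfolding graph_connected_def by auto
    have "\<exists>x\<in>C. \<exists>w. w \<in> V - {v} \<and> w \<notin> W \<and> adj E x w"
    proof (rule exit_lemma[OF gv, of E C W c u])
      show "\<And>a b. adj {e \<in> E. v \<notin> e} a b \<Longrightarrow> adj E a b" by (simp add: adj_def)
      show "C \<subseteq> V - {v}" using CW W(1) by blast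
      show "C \<subseteq> W" using CW by blast
      show "c \<in> C" by (rule c)
      show "u \<in> V - {v}" using W(2,3) v by blast
      show "u \<notin> W" by (rule W(3))
      show "\<forall>a\<in>C. \<forall>b\<in>V - {v}. adj E a b \<longrightarrow> b \<in> C \<or> b \<notin> W"
        using cl by blast
    qed
    then obtain x w where x: "x \<in> C" "w \<in> V - W" "adj E x w" by auto
    show "\<exists>x\<in>C. (\<exists>w\<in>V-W. adj E x w) \<and> (W - {x} = {} \<or> connected_rel (W-{x}) (adj E))"
    proof (cases "W - {x} = {} \<or> connected_rel (W-{x}) (adj E)")
      case True then show ?thesis using x by blast
    next
      case False
      then have ne: "W - {x} \<noteq> {}" and nc: "\<not> (\<forall>a\<in>W-{x}. \<forall>b\<in>W-{x}. reach E (W-{x}) a b)"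
        unfolding conn_reach by auto
      have vx: "v \<in> W - {x}" using v x CW by auto
      define D where "D = {y \<in> W - {x}. \<not> reach E (W-{x}) v y}"
      have Dne: "D \<noteq> {}"
      proof
        assume "D = {}"
        then have "\<forall>y\<in>W-{x}. reach E (W-{x}) v y" unfolding D_def by auto
        then have "\<forall>a\<in>W-{x}. \<forall>b\<in>W-{x}. reach E (W-{x}) a b"
        proof (intro ballI)
          fix a b assume h: "\<forall>y\<in>W-{x}. reach E (W-{x}) v y" and a: "a \<in> W-{x}" and b: "b \<in> W-{x}"
          have "reach E (W-{x}) a v" using reach_sym[OF h[rule_format, OF a]] .
          moreover have "reach E (W-{x}) v b" using h[rule_format, OF b] .
          ultimately show "reach E (W-{x}) a b" by (rule reach_trans)
        qed
        with nc show False by blast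
      qed
      have DC: "D \<subseteq> C - {x}"
      proof
        fix y assume y: "y \<in> D"
        have "reach E W v y" using W(4) v y unfolding conn_reach D_def by auto
        then have "y \<in> C \<or> reach E (W - C) v y"
          using reach_split[OF cl] CW by auto
        moreover have WC: "W - C \<subseteq> W - {x}" using x by auto
        ultimately have "y \<in> C \<or> reach E (W - {x}) v y" using reach_mono[OF WC] by blast
        then show "y \<in> C - {x}" using y unfolding D_def by blast
      qed
      have fC: "finite C" using CW W(5) finite_subset by blast
      have "card D \<le> card (C - {x})" using DC fC by (intro card_mono) auto
      also have "\<dots> < card C" using fC x(1) by (rule card_Diff1_less)
      finally have lt: "card D < n" using n by simp
      have xW: "x \<in> W" using x CW by auto
      have DW: "D \<subseteq> W - {x}" unfolding D_def by auto
      have clD: "\<forall>a\<in>D. \<forall>b\<in>W. adj E a b \<longrightarrow> b \<in> D \<or> b = x"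
      proof (intro ballI impI)
        fix a b assume a: "a \<in> D" and b: "b \<in> W" and ab: "adj E a b"
        show "b \<in> D \<or> b = x"
        proof (rule ccontr)
          assume "\<not> (b \<in> D \<or> b = x)"
          then have "reach E (W-{x}) v b" "b \<in> W - {x}" using b unfolding D_def by auto
          moreover have "adj E b a" using ab by (simp add: adj_sym)
          moreover have "a \<in> W - {x}" using a DW by blast
          ultimately have "reach E (W-{x}) v a" by (intro reach_step[of E "W-{x}" v b a])
          with a show False unfolding D_def by auto
        qed
      qed
      have "\<exists>x\<in>D. (\<exists>w\<in>V-W. adj E x w) \<and> (W - {x} = {} \<or> connected_rel (W-{x}) (adj E))"
        using less.IH[OF lt, rule_format, OF refl xW DW Dne] clD by blast
      then show ?thesis using DC by blast
    qed
  qed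
qed


lemma build:
  assumes G: "\<And>v. v \<in> V \<Longrightarrow> graph_connected (V - {v}) {e\<in>E. v \<notin> e}"
  and GC: "graph_connected V E" and fV: "finite V" and u: "u \<in> V"
  shows "W \<subseteq> V - {u} \<Longrightarrow> W \<noteq> {} \<Longrightarrow> connected_rel W (adj E) \<Longrightarrow>
    \<exists>vs. distinct vs \<and> set vs = W \<and> (\<forall>l\<in>{1..length vs}. connected_rel (set (take l vs)) (adj E)) \<and>
      (\<forall>l\<in>{1..length vs}. \<exists>w\<in>V - set (take l vs). adj E (vs!(l-1)) w)"
proof (induction "card W" arbitrary: W rule: less_induct)
  case less
  have fW: "finite W" using less.prems(1) fV finite_subset by blast
  have WV: "W \<subseteq> V" "u \<notin> W" using less.prems(1) by auto
  obtain x where x: "x \<in> W" "\<exists>w\<in>V-W. adj E x w" "W - {x} = {} \<or> connected_rel (W - {x}) (adj E)"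
  proof (cases "\<exists>v. W = {v}")
    case True
    then obtain v where v: "W = {v}" by auto
    have gc: "connected_rel V (adj E)" using GC unfolding graph_connected_def .
    have "\<exists>x\<in>W. \<exists>w. w \<in> V \<and> w \<notin> W \<and> adj E x w"
    proof (rule exit_lemma[OF gc, of E W W v u])
      show "\<And>a b. adj E a b \<Longrightarrow> adj E a b" .
      show "W \<subseteq> V" by (rule WV(1))
      show "W \<subseteq> W" by simp
      show "v \<in> W" using v by simp
      show "u \<in> V" by (rule u)
      show "u \<notin> W" by (rule WV(2))
      show "\<forall>a\<in>W. \<forall>b\<in>V. adj E a b \<longrightarrow> b \<in> W \<or> b \<notin> W" by blast
    qed
    then obtain x w where "x \<in> W" "w \<in> V" "w \<notin> W" "adj E x w" by blast
    then show ?thesis using that v by blast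
  next
    case False
    obtain v where v: "v \<in> W" using less.prems(2) by auto
    have Cne: "W - {v} \<noteq> {}" using False v by blast
    have cl: "\<forall>a\<in>W - {v}. \<forall>b\<in>W. adj E a b \<longrightarrow> b \<in> W - {v} \<or> b = v" by blast
    have "\<exists>x\<in>W - {v}. (\<exists>w\<in>V-W. adj E x w) \<and> (W - {x} = {} \<or> connected_rel (W-{x}) (adj E))"
      proof -
      have "\<forall>y C. card C = card (W - {v}) \<longrightarrow> y \<in> W \<longrightarrow> C \<subseteq> W - {y} \<longrightarrow> C \<noteq> {} \<longrightarrow>
         (\<forall>a\<in>C. \<forall>b\<in>W. adj E a b \<longrightarrow> b \<in> C \<or> b = y) \<longrightarrow>
         (\<exists>x\<in>C. (\<exists>w\<in>V-W. adj E x w) \<and> (W - {x} = {} \<or> connected_rel (W-{x}) (adj E)))"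
        by (rule find_x[OF G WV(1) u WV(2) less.prems(3) fW])
      then have "card (W - {v}) = card (W - {v}) \<longrightarrow> v \<in> W \<longrightarrow> W - {v} \<subseteq> W - {v} \<longrightarrow> W - {v} \<noteq> {} \<longrightarrow>
         (\<forall>a\<in>W - {v}. \<forall>b\<in>W. adj E a b \<longrightarrow> b \<in> W - {v} \<or> b = v) \<longrightarrow>
         (\<exists>x\<in>W - {v}. (\<exists>w\<in>V-W. adj E x w) \<and> (W - {x} = {} \<or> connected_rel (W-{x}) (adj E)))"
        by blast
      then show ?thesis using v Cne cl by blast
    qed
    then show ?thesis using that by blast
  qed
  show ?case
  proof (cases "W - {x} = {}")
    case True
    then have Wx: "W = {x}" using x(1) by blast
    show ?thesis
    proof (intro exI conjI)
      show "distinct [x]" by simp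
      show "set [x] = W" using Wx by simp
      show "\<forall>l\<in>{1..length [x]}. connected_rel (set (take l [x])) (adj E)"
        using less.prems(3) Wx by simp
      show "\<forall>l\<in>{1..length [x]}. \<exists>w\<in>V - set (take l [x]). adj E ([x]!(l-1)) w"
        using x(2) Wx by simp
    qed
  next
    case False
    with x(3) have cx: "connected_rel (W - {x}) (adj E)" by blast
    have lt: "card (W - {x}) < card W" using fW x(1) by (rule card_Diff1_less)
    obtain ws where ws: "distinct ws" "set ws = W - {x}"
      "\<forall>l\<in>{1..length ws}. connected_rel (set (take l ws)) (adj E)"
      "\<forall>l\<in>{1..length ws}. \<exists>w\<in>V - set (take l ws). adj E (ws!(l-1)) w"
      using less.hyps[OF lt] less.prems(1) False cx by blast
    show ?thesis
    proof (intro exI conjI ballI)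
      show "distinct (ws @ [x])" using ws(1,2) by simp
      show "set (ws @ [x]) = W" using ws(2) x(1) by auto
    next
      fix l assume l: "l \<in> {1..length (ws @ [x])}"
      show "connected_rel (set (take l (ws @ [x]))) (adj E)"
      proof (cases "l \<le> length ws")
        case True
        then show ?thesis using ws(3) l by simp
      next
        case False
        then have "l = length ws + 1" using l by simp
        then show ?thesis using less.prems(3) ws(2) x(1) by (simp add: insert_absorb)
      qed
    next
      fix l assume l: "l \<in> {1..length (ws @ [x])}"
      show "\<exists>w\<in>V - set (take l (ws @ [x])). adj E ((ws @ [x]) ! (l - 1)) w"
      proof (cases "l \<le> length ws")
        case True
        then have "l - 1 < length ws" using l by simp
        then show ?thesis using ws(4) l True by (simp add: nth_append)
      next
        case False
        then have "l = length ws + 1" using l by simp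
        then show ?thesis using x(2) ws(2) x(1) by (simp add: insert_absorb)
      qed
    qed
  qed
qed


lemma LG_onehop:
  assumes "e \<in> inc_edges E S" "e' \<in> inc_edges E S" "t \<in> S" "t \<in> e" "t \<in> e'"
  shows "(\<lambda>a b. a \<in> inc_edges E S \<and> b \<in> inc_edges E S \<and> LG_adj S a b)\<^sup>*\<^sup>* e e'"
proof (cases "e = e'")
  case True then show ?thesis by simp
next
  case False
  then have "LG_adj S e e'" using assms unfolding LG_adj_def by blast
  then show ?thesis using assms(1,2) by (intro r_into_rtranclp) simp
qed

lemma LG_path:
  assumes r: "reach E S s t" and s: "s \<in> S" "s \<in> e" "e \<in> inc_edges E S"
  shows "\<forall>e'. e' \<in> inc_edges E S \<longrightarrow> t \<in> e' \<longrightarrow>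
    (\<lambda>a b. a \<in> inc_edges E S \<and> b \<in> inc_edges E S \<and> LG_adj S a b)\<^sup>*\<^sup>* e e'"
  using r unfolding reach_def
proof (induction rule: rtranclp_induct)
  case base
  show ?case
  proof (intro allI impI)
    fix e' assume "e' \<in> inc_edges E S" "s \<in> e'"
    then show "(\<lambda>a b. a \<in> inc_edges E S \<and> b \<in> inc_edges E S \<and> LG_adj S a b)\<^sup>*\<^sup>* e e'"
      using LG_onehop[OF s(3), of e' s] s(1,2) by blast
  qed
next
  case (step y z)
  have f: "{y, z} \<in> inc_edges E S" using step(2) unfolding inc_edges_def adj_def by auto
  have ef: "(\<lambda>a b. a \<in> inc_edges E S \<and> b \<in> inc_edges E S \<and> LG_adj S a b)\<^sup>*\<^sup>* e {y, z}"
    using step(3) f by simp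
  show ?case
  proof (intro allI impI)
    fix e' assume e': "e' \<in> inc_edges E S" "z \<in> e'"
    have "(\<lambda>a b. a \<in> inc_edges E S \<and> b \<in> inc_edges E S \<and> LG_adj S a b)\<^sup>*\<^sup>* {y, z} e'"
      using LG_onehop[OF f e'(1), of z] step(2) e'(2) by simp
    with ef show "(\<lambda>a b. a \<in> inc_edges E S \<and> b \<in> inc_edges E S \<and> LG_adj S a b)\<^sup>*\<^sup>* e e'"
      by (rule rtranclp_trans)
  qed
qed

lemma LG_conn:
  assumes c: "connected_rel S (adj E)" and d: "\<forall>s\<in>S. \<exists>y. adj E s y"
  shows "LG_connected E S"
  unfolding LG_connected_def connected_rel_def
proof (intro conjI ballI)
  obtain s where s: "s \<in> S" using c unfolding connected_rel_def by auto
  then obtain y where "adj E s y" using d by blast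
  then have "{s, y} \<in> inc_edges E S" using s unfolding adj_def inc_edges_def by auto
  then show "inc_edges E S \<noteq> {}" by auto
next
  fix e1 e2 assume e: "e1 \<in> inc_edges E S" "e2 \<in> inc_edges E S"
  obtain s1 where s1: "s1 \<in> e1" "s1 \<in> S" using e(1) unfolding inc_edges_def by auto
  obtain s2 where s2: "s2 \<in> e2" "s2 \<in> S" using e(2) unfolding inc_edges_def by auto
  have "reach E S s1 s2" using c s1 s2 unfolding conn_reach by blast
  from LG_path[OF this s1(2) s1(1) e(1)] e(2) s2(1)
  show "(\<lambda>a b. a \<in> inc_edges E S \<and> b \<in> inc_edges E S \<and> LG_adj S a b)\<^sup>*\<^sup>* e1 e2" by blast
qed

lemma conn_mono:
  assumes "connected_rel W R1" "\<And>a b. R1 a b \<Longrightarrow> R2 a b"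
  shows "connected_rel W R2"
proof -
  have m: "(\<lambda>a b. a \<in> W \<and> b \<in> W \<and> R1 a b) \<le> (\<lambda>a b. a \<in> W \<and> b \<in> W \<and> R2 a b)"
    using assms(2) by auto
  show ?thesis using assms(1) rtranclp_mono[OF m] unfolding connected_rel_def
    by (meson predicate2D)
qed

lemma has_nb:
  assumes "graph_connected V E" "u \<in> V" "s \<in> V" "s \<noteq> u"
  shows "\<exists>y. adj E s y"
proof -
  have "(\<lambda>a b. a \<in> V \<and> b \<in> V \<and> adj E a b)\<^sup>*\<^sup>* s u"
    using assms unfolding graph_connected_def connected_rel_def by blast
  then show ?thesis using assms(4) by (cases rule: converse_rtranclpE) auto
qed

theorem mainTheorem10:
  fixes V :: "'a set" and E :: "'a set set" and u :: 'a
  assumes "simple_graph V E" and "two_connected V E" and "u \<in> V"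
  shows "\<exists>vs. distinct vs \<and> set vs = V - {u} \<and> length vs = card V - 1 \<and>
    (\<forall>l\<in>{1..length vs}. LG_connected E (set (take l vs))) \<and>
    (\<forall>l\<in>{2..length vs}. inc_edges E (set (take l vs)) - inc_edges E (set (take (l - 1) vs)) \<noteq> {})"
proof -
  have fV: "finite V" using assms(1) unfolding simple_graph_def by blast
  have GC: "graph_connected V E" and c3: "card V \<ge> 3"
    and G: "\<And>v. v \<in> V \<Longrightarrow> graph_connected (V - {v}) {e\<in>E. v \<notin> e}"
    using assms(2) unfolding two_connected_def by auto
  have ne: "V - {u} \<noteq> {}"
  proof
    assume "V - {u} = {}"
    then have "V \<subseteq> {u}" by blast
    then have "card V \<le> card {u}" by (intro card_mono) auto
    with c3 show False by simp
  qed
  have cu: "connected_rel (V - {u}) (adj E)"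
    using G[OF assms(3)] unfolding graph_connected_def
    by (rule conn_mono) (simp add: adj_def)
  obtain vs where vs: "distinct vs" "set vs = V - {u}"
    "\<forall>l\<in>{1..length vs}. connected_rel (set (take l vs)) (adj E)"
    "\<forall>l\<in>{1..length vs}. \<exists>w\<in>V - set (take l vs). adj E (vs!(l-1)) w"
    using build[OF G GC fV assms(3), of "V - {u}"] ne cu by blast
  show ?thesis
  proof (intro exI conjI ballI)
    show "distinct vs" "set vs = V - {u}" by (fact vs(1), fact vs(2))
    show "length vs = card V - 1"
    proof -
      have "length vs = card (V - {u})" using distinct_card[OF vs(1)] vs(2) by simp
      also have "\<dots> = card V - 1" using fV assms(3) by (simp add: card_Diff_singleton)
      finally show ?thesis .
    qed
  next
    fix l assume l: "l \<in> {1..length vs}"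
    have "set (take l vs) \<subseteq> set vs" by (rule set_take_subset)
    then have sub: "set (take l vs) \<subseteq> V - {u}" using vs(2) by simp
    show "LG_connected E (set (take l vs))"
    proof (rule LG_conn)
      show "connected_rel (set (take l vs)) (adj E)" using vs(3) l by blast
      show "\<forall>s\<in>set (take l vs). \<exists>y. adj E s y"
        using sub has_nb[OF GC assms(3)] by blast
    qed
  next
    fix l assume l: "l \<in> {2..length vs}"
    then obtain w where w: "w \<in> V - set (take l vs)" "adj E (vs!(l-1)) w" using vs(4) by force
    have lt: "l - 1 < length vs" using l by auto
    have tk: "take l vs = take (l - 1) vs @ [vs!(l-1)]"
      using take_Suc_conv_app_nth[OF lt] l by simp
    have "distinct (take l vs)" using vs(1) by simp
    then have nin: "vs!(l-1) \<notin> set (take (l - 1) vs)" using tk by simp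
    let ?e = "{vs!(l-1), w}"
    have "?e \<in> inc_edges E (set (take l vs))" using w tk unfolding inc_edges_def adj_def by auto
    moreover have "?e \<notin> inc_edges E (set (take (l - 1) vs))"
      using w tk nin unfolding inc_edges_def by auto
    ultimately show "inc_edges E (set (take l vs)) - inc_edges E (set (take (l - 1) vs)) \<noteq> {}" by blast
  qed
qed

end
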